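(* Let $\alpha\le N$ and $0<\sigma<N$. There exists $C=C(\Omega,\Sigma,\alpha,\sigma)>0$ such that $$\mathcal N_{\alpha,\sigma}^{-1}(x,y)\le C\big(\mathcal N_{\alpha,\sigma}^{-1}(x,z)+\mathcal N_{\alpha,\sigma}^{-1}(z,y)\big)$$ for all pairwise distinct $x,y,z\in\overline\Omega$.
   Context: $\Omega\subset\mathbb R^N$ ($N\ge3$) is a bounded $C^2$ domain, $\Sigma\subset\partial\Omega$ a compact $C^2$ submanifold without boundary of dimension $k\in\{0,\dots,N-1\}$, $d=\mathrm{dist}(\cdot,\partial\Omega)$, $d_\Sigma=\mathrm{dist}(\cdot,\Sigma)$. For $x,y\in\overline\Omega$, $x\ne y$: $$\mathcal N_{\alpha,\sigma}(x,y):=\frac{\max\{|x-y|,d_\Sigma(x),d_\Sigma(y)\}^\alpha}{|x-y|^{N-\sigma}\max\{|x-y|,d(x),d(y)\}^\sigma},$$ and $\mathcal N^{-1}_{\alpha,\sigma}=1/\mathcal N_{\alpha,\sigma}$. *)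

theory Defs
  imports "HOL-Analysis.Analysis"
begin

definition C1_on :: "'a::euclidean_space set \<Rightarrow> ('a \<Rightarrow> 'b::real_normed_vector) \<Rightarrow> bool" where
  "C1_on U f \<longleftrightarrow> (\<exists>f'. (\<forall>x\<in>U. (f has_derivative blinfun_apply (f' x)) (at x)) \<and> continuous_on U f')"

definition C2_on :: "'a::euclidean_space set \<Rightarrow> ('a \<Rightarrow> 'b::real_normed_vector) \<Rightarrow> bool" where
  "C2_on U f \<longleftrightarrow> (\<exists>f'. (\<forall>x\<in>U. (f has_derivative blinfun_apply (f' x)) (at x)) \<and> C1_on U f')"

text \<open>Bounded C^2 domain: open, bounded, connected, and locally above the graph of a C^2
  function (in rotated coordinates: unit normal direction nu, graph over the hyperplane nu-perp).\<close>
definition C2_bounded_domain :: "'a::euclidean_space set \<Rightarrow> bool" where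
  "C2_bounded_domain \<Omega> \<longleftrightarrow> open \<Omega> \<and> bounded \<Omega> \<and> connected \<Omega> \<and> \<Omega> \<noteq> {} \<and>
     (\<forall>p\<in>frontier \<Omega>. \<exists>r>0. \<exists>\<nu>::'a. \<exists>\<gamma>::'a \<Rightarrow> real. norm \<nu> = 1 \<and> C2_on UNIV \<gamma> \<and>
        \<Omega> \<inter> ball p r = {x\<in>ball p r. x \<bullet> \<nu> > \<gamma> (x - (x \<bullet> \<nu>) *\<^sub>R \<nu>)})"

definition C2_compact_submanifold :: "'a::euclidean_space set \<Rightarrow> nat \<Rightarrow> bool" where
  "C2_compact_submanifold \<Sigma> k \<longleftrightarrow> compact \<Sigma> \<and>
     (\<forall>p\<in>\<Sigma>. \<exists>U \<phi> \<psi> B. open U \<and> p \<in> U \<and> open (\<phi> ` U) \<and>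
        C2_on U (\<phi> :: 'a \<Rightarrow> 'a) \<and> C2_on (\<phi> ` U) (\<psi> :: 'a \<Rightarrow> 'a) \<and>
        (\<forall>x\<in>U. \<psi> (\<phi> x) = x) \<and> (\<forall>y\<in>\<phi> ` U. \<phi> (\<psi> y) = y) \<and>
        B \<subseteq> Basis \<and> card B = k \<and>
        \<phi> ` (\<Sigma> \<inter> U) = \<phi> ` U \<inter> {y. \<forall>i\<in>Basis - B. y \<bullet> i = 0})"

definition kerN :: "'a::euclidean_space set \<Rightarrow> 'a set \<Rightarrow> real \<Rightarrow> real \<Rightarrow> 'a \<Rightarrow> 'a \<Rightarrow> real" where
  "kerN \<Omega> \<Sigma> \<alpha> \<sigma> x y =
     (max (dist x y) (max (infdist x \<Sigma>) (infdist y \<Sigma>))) powr \<alpha> /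
     ((dist x y) powr (real DIM('a) - \<sigma>) *
      (max (dist x y) (max (infdist x (frontier \<Omega>)) (infdist y (frontier \<Omega>)))) powr \<sigma>)"

definition kerN_inv :: "'a::euclidean_space set \<Rightarrow> 'a set \<Rightarrow> real \<Rightarrow> real \<Rightarrow> 'a \<Rightarrow> 'a \<Rightarrow> real" where
  "kerN_inv \<Omega> \<Sigma> \<alpha> \<sigma> x y = 1 / kerN \<Omega> \<Sigma> \<alpha> \<sigma> x y"

end

theory Submission
  imports Defs
begin

lemma key:
  fixes n \<sigma> \<alpha> r s dx dy dz ex ey ez :: real
  assumes s0: "0 < \<sigma>" and s1: "\<sigma> < n" and an: "\<alpha>\<le>n" and r0: "r>0" and s00: "s>0" and rs: "r \<le> 2 * s"
    and "dx\<ge>0" "dy\<ge>0" "dz\<ge>0" "ex\<ge>0" "ey\<ge>0" "ez\<ge>0"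
    and "\<bar>dy-dx\<bar> \<le> r" "\<bar>dz-dx\<bar> \<le> s" "\<bar>ey-ex\<bar> \<le> r" "\<bar>ez-ex\<bar> \<le> s" "dx \<le> ex"
  defines "M \<equiv> max r (max dx dy)" and "M' \<equiv> max s (max dx dz)"
    and "P \<equiv> max r (max ex ey)" and "P' \<equiv> max s (max ex ez)"
  shows "r powr (n-\<sigma>) * M powr \<sigma> / P powr \<alpha> \<le>
     (2 powr (n-\<sigma>) * 4 powr \<sigma> * 4 powr \<bar>\<alpha>\<bar> + 2 powr \<sigma> * 4 powr (n-\<alpha>) * 2 powr \<alpha>
      + 2 powr (n-\<sigma>) * 4 powr \<sigma> * 2 powr \<alpha>) *
     (s powr (n-\<sigma>) * M' powr \<sigma> / P' powr \<alpha>)"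
proof -
  define C1 where "C1 = 2 powr (n-\<sigma>) * 4 powr \<sigma> * 4 powr \<bar>\<alpha>\<bar>"
  define C2 where "C2 = 2 powr \<sigma> * 4 powr (n-\<alpha>) * 2 powr \<alpha>"
  define C3 where "C3 = 2 powr (n-\<sigma>) * 4 powr \<sigma> * 2 powr \<alpha>"
  have Mp: "M>0" "M'>0" "P>0" "P'>0" using r0 s00 by (auto simp: M_def M'_def P_def P'_def)
  have MM: "M \<le> 4 * M'" using assms by (auto simp: M_def M'_def)
  have rM: "r \<le> M" "r \<le> P" by (auto simp: M_def P_def)
  have MP: "M \<le> 2 * P" using assms by (auto simp: M_def P_def)
  have PP: "P \<le> 4 * P'" using assms by (auto simp: P_def P'_def)
  have sM: "s \<le> M'" by (auto simp: M'_def)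
  let ?R = "s powr (n-\<sigma>) * M' powr \<sigma> / P' powr \<alpha>"
  have R0: "?R \<ge> 0" by simp
  have C0: "C1 \<ge> 0" "C2 \<ge> 0" "C3 \<ge> 0" by (auto simp: C1_def C2_def C3_def)
  have L1: "r powr (n-\<sigma>) \<le> 2 powr (n-\<sigma>) * s powr (n-\<sigma>)"
    using powr_mono2[of "n-\<sigma>" r "2 * s"] rs r0 s1 by (simp add: powr_mult)
  have L2: "M powr \<sigma> \<le> 4 powr \<sigma> * M' powr \<sigma>"
    using powr_mono2[of "\<sigma>" M "4 * M'"] MM Mp s0 by (simp add: powr_mult)
  have main: "r powr (n-\<sigma>) * M powr \<sigma> / P powr \<alpha> \<le> C1 * ?R \<or>
     r powr (n-\<sigma>) * M powr \<sigma> / P powr \<alpha> \<le> C2 * ?R \<or>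
     r powr (n-\<sigma>) * M powr \<sigma> / P powr \<alpha> \<le> C3 * ?R"
  proof (cases "\<alpha> \<le> 0")
    case True
    have "P powr (-\<alpha>) \<le> (4 * P') powr (-\<alpha>)"
      using powr_mono2[of "-\<alpha>" P "4 * P'"] PP Mp True by simp
    hence L3: "P powr (-\<alpha>) \<le> 4 powr \<bar>\<alpha>\<bar> * P' powr (-\<alpha>)" using True by (simp add: powr_mult)
    have "r powr (n-\<sigma>) * M powr \<sigma> * P powr (-\<alpha>) \<le>
       (2 powr (n-\<sigma>) * s powr (n-\<sigma>)) * (4 powr \<sigma> * M' powr \<sigma>) * (4 powr \<bar>\<alpha>\<bar> * P' powr (-\<alpha>))"
      by (intro mult_mono L1 L2 L3) auto
    also have "\<dots> = C1 * ?R" by (simp add: C1_def powr_minus_divide)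
    finally show ?thesis by (simp add: powr_minus_divide)
  next
    case F: False
    show ?thesis
    proof (cases "ex \<ge> s")
      case True
      have "P' \<le> 2 * P" using assms True by (auto simp: P_def P'_def)
      hence "P powr (-\<alpha>) \<le> (P'/2) powr (-\<alpha>)"
        using powr_mono2'[of "-\<alpha>" "P'/2" P] Mp F by simp
      hence L3: "P powr (-\<alpha>) \<le> 2 powr \<alpha> * P' powr (-\<alpha>)" 
        by (simp add: powr_divide powr_minus_divide)
      have "r powr (n-\<sigma>) * M powr \<sigma> * P powr (-\<alpha>) \<le>
         (2 powr (n-\<sigma>) * s powr (n-\<sigma>)) * (4 powr \<sigma> * M' powr \<sigma>) * (2 powr \<alpha> * P' powr (-\<alpha>))"
        by (intro mult_mono L1 L2 L3) auto
      also have "\<dots> = C3 * ?R" by (simp add: C3_def powr_minus_divide)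
      finally show ?thesis by (simp add: powr_minus_divide)
    next
      case False
      have P2: "P' \<le> 2 * s" using assms False by (auto simp: P'_def)
      have P4: "P \<le> 4 * s" using assms False by (auto simp: P_def)
      have "r powr (n-\<sigma>) * M powr \<sigma> * P powr (-\<alpha>) \<le> P powr (n-\<sigma>) * (2 * P) powr \<sigma> * P powr (-\<alpha>)"
        using rM MP s1 s0 Mp r0
        by (intro mult_right_mono mult_mono powr_mono2) auto
      also have "\<dots> = 2 powr \<sigma> * P powr (n-\<alpha>)"
        by (simp add: powr_mult flip: powr_add)
      also have "\<dots> \<le> 2 powr \<sigma> * (4 * s) powr (n-\<alpha>)"
        using powr_mono2[of "n-\<alpha>" P "4 * s"] an P4 Mp by simp
      also have "\<dots> = C2 * (2 powr (-\<alpha>) * s powr (n-\<alpha>))"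
        by (simp add: C2_def powr_mult powr_minus_divide)
      also have "2 powr (-\<alpha>) * s powr (n-\<alpha>) = s powr (n-\<sigma>) * s powr \<sigma> * (2 * s) powr (-\<alpha>)"
        by (simp add: powr_mult flip: powr_add)
      also have "\<dots> \<le> s powr (n-\<sigma>) * M' powr \<sigma> * P' powr (-\<alpha>)"
      proof -
        have a: "s powr \<sigma> \<le> M' powr \<sigma>" using sM s0 s00 by (intro powr_mono2) auto
        have b: "(2 * s) powr (-\<alpha>) \<le> P' powr (-\<alpha>)" using P2 F Mp by (intro powr_mono2') auto
        show ?thesis using a b by (intro mult_mono mult_left_mono) auto
      qed
      finally show ?thesis using C0 by (auto simp: powr_minus_divide mult_left_mono)
    qed
  qed
  have "C1 * ?R \<le> (C1+C2+C3) * ?R" "C2 * ?R \<le> (C1+C2+C3) * ?R" "C3 * ?R \<le> (C1+C2+C3) * ?R"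
    using C0 R0 by (intro mult_right_mono; simp)+
  then show ?thesis using main unfolding C1_def C2_def C3_def by linarith
qed


lemma kerN_inv_eq:
  "kerN_inv \<Omega> \<Sigma> \<alpha> \<sigma> x y = dist x y powr (real DIM('a) - \<sigma>) *
      max (dist x y) (max (infdist x (frontier \<Omega>)) (infdist y (frontier \<Omega>))) powr \<sigma> /
      max (dist x y) (max (infdist x \<Sigma>) (infdist y \<Sigma>)) powr \<alpha>"
  for x y :: "'a::euclidean_space"
  by (simp add: kerN_inv_def kerN_def)

lemma kerN_inv_sym: "kerN_inv \<Omega> \<Sigma> \<alpha> \<sigma> x y = kerN_inv \<Omega> \<Sigma> \<alpha> \<sigma> y x"
  by (simp add: kerN_inv_eq dist_commute max.commute max.left_commute)

lemma kerN_inv_nonneg: "kerN_inv \<Omega> \<Sigma> \<alpha> \<sigma> x y \<ge> 0"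
  by (simp add: kerN_inv_eq)

lemma half:
  fixes \<Omega> \<Sigma> :: "'a::euclidean_space set"
  assumes "\<Sigma> \<subseteq> frontier \<Omega>" "\<Sigma> \<noteq> {}" "0 < \<sigma>" "\<sigma> < real DIM('a)" "\<alpha> \<le> real DIM('a)"
    and "x \<noteq> y" "x \<noteq> z" "dist x y \<le> 2 * dist x z"
  shows "kerN_inv \<Omega> \<Sigma> \<alpha> \<sigma> x y \<le>
     (2 powr (real DIM('a)-\<sigma>) * 4 powr \<sigma> * 4 powr \<bar>\<alpha>\<bar> + 2 powr \<sigma> * 4 powr (real DIM('a)-\<alpha>) * 2 powr \<alpha>
      + 2 powr (real DIM('a)-\<sigma>) * 4 powr \<sigma> * 2 powr \<alpha>) * kerN_inv \<Omega> \<Sigma> \<alpha> \<sigma> x z"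
  unfolding kerN_inv_eq
  apply (rule key)
  using assms infdist_mono[OF assms(1,2)]
    infdist_triangle_abs[of y "frontier \<Omega>" x] infdist_triangle_abs[of z "frontier \<Omega>" x]
    infdist_triangle_abs[of y \<Sigma> x] infdist_triangle_abs[of z \<Sigma> x]
  by (auto simp: infdist_nonneg dist_commute)

theorem lemma5p2:
  fixes \<Omega> \<Sigma> :: "'a::euclidean_space set" and k :: nat and \<alpha> \<sigma> :: real
  assumes "DIM('a) \<ge> 3"
    and "C2_bounded_domain \<Omega>"
    and "\<Sigma> \<subseteq> frontier \<Omega>" and "\<Sigma> \<noteq> {}"
    and "k < DIM('a)"
    and "C2_compact_submanifold \<Sigma> k"
    and "\<alpha> \<le> real DIM('a)" and "0 < \<sigma>" and "\<sigma> < real DIM('a)"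
  shows "\<exists>C>0. \<forall>x\<in>closure \<Omega>. \<forall>y\<in>closure \<Omega>. \<forall>z\<in>closure \<Omega>.
           x \<noteq> y \<longrightarrow> y \<noteq> z \<longrightarrow> x \<noteq> z \<longrightarrow>
           kerN_inv \<Omega> \<Sigma> \<alpha> \<sigma> x y \<le> C * (kerN_inv \<Omega> \<Sigma> \<alpha> \<sigma> x z + kerN_inv \<Omega> \<Sigma> \<alpha> \<sigma> z y)"
proof -
  define C where "C = (2 powr (real DIM('a)-\<sigma>) * 4 powr \<sigma> * 4 powr \<bar>\<alpha>\<bar> + 2 powr \<sigma> * 4 powr (real DIM('a)-\<alpha>) * 2 powr \<alpha>
      + 2 powr (real DIM('a)-\<sigma>) * 4 powr \<sigma> * 2 powr \<alpha>)"
  have C0: "C > 0" unfolding C_def by (intro add_pos_pos mult_pos_pos) auto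
  have "kerN_inv \<Omega> \<Sigma> \<alpha> \<sigma> x y \<le> C * (kerN_inv \<Omega> \<Sigma> \<alpha> \<sigma> x z + kerN_inv \<Omega> \<Sigma> \<alpha> \<sigma> z y)"
    if "x \<noteq> y" "y \<noteq> z" "x \<noteq> z" for x y z
  proof (cases "dist x y \<le> 2 * dist x z")
    case True
    have "kerN_inv \<Omega> \<Sigma> \<alpha> \<sigma> x y \<le> C * kerN_inv \<Omega> \<Sigma> \<alpha> \<sigma> x z"
      unfolding C_def using half[OF assms(3,4,8,9,7) that(1,3) True] .
    also have "\<dots> \<le> C * (kerN_inv \<Omega> \<Sigma> \<alpha> \<sigma> x z + kerN_inv \<Omega> \<Sigma> \<alpha> \<sigma> z y)"
      using C0 kerN_inv_nonneg[of \<Omega> \<Sigma> \<alpha> \<sigma> z y] by (intro mult_left_mono) auto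
    finally show ?thesis .
  next
    case False
    have "dist x y \<le> dist x z + dist z y" by (rule dist_triangle)
    hence T: "dist y x \<le> 2 * dist y z" using False by (simp add: dist_commute)
    have "kerN_inv \<Omega> \<Sigma> \<alpha> \<sigma> x y = kerN_inv \<Omega> \<Sigma> \<alpha> \<sigma> y x" by (rule kerN_inv_sym)
    also have "\<dots> \<le> C * kerN_inv \<Omega> \<Sigma> \<alpha> \<sigma> y z"
      unfolding C_def using half[OF assms(3,4,8,9,7) _ _ T] that by auto
    also have "\<dots> = C * kerN_inv \<Omega> \<Sigma> \<alpha> \<sigma> z y" by (simp add: kerN_inv_sym)
    also have "\<dots> \<le> C * (kerN_inv \<Omega> \<Sigma> \<alpha> \<sigma> x z + kerN_inv \<Omega> \<Sigma> \<alpha> \<sigma> z y)"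
      using C0 kerN_inv_nonneg[of \<Omega> \<Sigma> \<alpha> \<sigma> x z] by (intro mult_left_mono) auto
    finally show ?thesis .
  qed
  thus ?thesis using C0 by blast
qed

end
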